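(* Let $k$ be a positive integer, $a_1>a_2>\cdots>a_{k+2}$ real numbers in $[a,b]$, and $w_1,\dots,w_{k+2}$ real weights with $w_1\ge 0$ and $(-1)^kw_{k+2}\ge 0$, such that $\sum_{i=1}^{k+2}w_ia_i^j=0$ for all integers $0\le j<k$. Then $\sum_{i=1}^{k+2}w_if(a_i)\ge 0$ for every $k$ times differentiable $f:[a,b]\to\mathbb{R}$ with $f^{(k)}\ge 0$. *)

theory Defs
  imports "HOL-Analysis.Analysis"
begin

end

theory Submission
  imports Defs "HOL-Computational_Algebra.Polynomial"
begin

lemma rolle_within:
  fixes F F' :: "real \<Rightarrow> real"
  assumes "a \<le> u" "u < v" "v \<le> b"
    and der: "\<forall>t\<in>{a..b}. (F has_real_derivative F' t) (at t within {a..b})"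
    and "F u = 0" "F v = 0"
  shows "\<exists>\<xi>. u < \<xi> \<and> \<xi> < v \<and> F' \<xi> = 0"
proof -
  have sub: "{u..v} \<subseteq> {a..b}" using assms by auto
  have "continuous_on {a..b} F"
    by (rule DERIV_continuous_on) (use der in auto)
  hence c: "continuous_on {u..v} F" using continuous_on_subset sub by blast
  have d: "(F has_derivative (*) (F' x)) (at x)" if "u < x" "x < v" for x
  proof -
    have "a < x" "x < b" using that assms by auto
    hence "at x within {a..b} = at x" by (rule at_within_Icc_at)
    moreover have "x \<in> {a..b}" using \<open>a < x\<close> \<open>x < b\<close> by auto
    ultimately have "(F has_real_derivative F' x) (at x)" using der by metis
    thus ?thesis by (simp add: has_field_derivative_def)
  qed
  obtain z where z: "u < z" "z < v" "(*) (F' z) = (\<lambda>h. 0)"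
    using Rolle_deriv[OF \<open>u < v\<close> _ c d] assms by force
  have "F' z * 1 = 0" using fun_cong[OF z(3), of 1] by simp
  hence "F' z = 0" by simp
  thus ?thesis using z(1,2) by blast
qed

lemma gen_rolle:
  fixes H :: "nat \<Rightarrow> real \<Rightarrow> real"
  assumes "\<forall>m<n. \<forall>t\<in>{a..b}. (H m has_real_derivative H (Suc m) t) (at t within {a..b})"
    and "finite Z" "card Z = Suc n" "Z \<subseteq> {a..b}" "\<forall>z\<in>Z. H 0 z = 0"
  shows "\<exists>\<xi>\<in>{a..b}. H n \<xi> = 0"
  using assms
proof (induction n arbitrary: H Z)
  case 0
  then obtain z where "z \<in> Z" by (metis card.empty ex_in_conv nat.distinct(1))
  thus ?case using 0 by auto
next
  case (Suc n)
  define zs where "zs = sorted_list_of_set Z"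
  have len: "length zs = Suc (Suc n)" using Suc.prems zs_def by simp
  have srt: "sorted_wrt (<) zs" using zs_def by simp
  have setz: "set zs = Z" using zs_def Suc.prems by simp
  have lt: "zs ! i < zs ! j" if "i < j" "j < Suc (Suc n)" for i j
    using srt that len by (simp add: sorted_wrt_iff_nth_less)
  have inZ: "zs ! i \<in> Z" if "i < Suc (Suc n)" for i
    using setz len that nth_mem by metis
  have "\<forall>i<Suc n. \<exists>\<xi>. zs ! i < \<xi> \<and> \<xi> < zs ! Suc i \<and> H 1 \<xi> = 0"
  proof (intro allI impI)
    fix i assume i: "i < Suc n"
    have "zs ! i \<in> {a..b}" "zs ! Suc i \<in> {a..b}" using inZ[of i] inZ[of "Suc i"] i Suc.prems(4) by auto
    moreover have "zs ! i < zs ! Suc i" using lt i by auto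
    moreover have "H 0 (zs ! i) = 0" "H 0 (zs ! Suc i) = 0" using inZ i Suc.prems(5) by auto
    moreover have "\<forall>t\<in>{a..b}. (H 0 has_real_derivative H 1 t) (at t within {a..b})"
      using Suc.prems(1) by auto
    ultimately show "\<exists>\<xi>. zs ! i < \<xi> \<and> \<xi> < zs ! Suc i \<and> H 1 \<xi> = 0"
      using rolle_within[of a "zs ! i" "zs ! Suc i" b "H 0" "H 1"] by auto
  qed
  then obtain \<xi> where xi: "\<forall>i<Suc n. zs ! i < \<xi> i \<and> \<xi> i < zs ! Suc i \<and> H 1 (\<xi> i) = 0"
    by metis
  have mono: "\<xi> i < \<xi> j" if "i < j" "j < Suc n" for i j
  proof -
    have "\<xi> i < zs ! Suc i" using xi that by auto
    also have "zs ! Suc i \<le> zs ! j" using lt[of "Suc i" j] that by (cases "Suc i = j") auto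
    also have "\<dots> < \<xi> j" using xi that by auto
    finally show ?thesis .
  qed
  have inj: "inj_on \<xi> {..<Suc n}"
    by (metis inj_on_def lessThan_iff linorder_neqE_nat mono order_less_irrefl)
  have "zs ! 0 \<in> {a..b}" "zs ! Suc n \<in> {a..b}" using inZ[of 0] inZ[of "Suc n"] Suc.prems(4) by auto
  hence inab: "\<xi> ` {..<Suc n} \<subseteq> {a..b}"
  proof -
    have "\<xi> i \<in> {a..b}" if "i < Suc n" for i
    proof -
      have "zs ! 0 \<le> zs ! i" using lt[of 0 i] that by (cases i) auto
      hence "zs ! 0 < \<xi> i" using xi that by auto
      moreover have "zs ! Suc i \<le> zs ! Suc n" using lt[of "Suc i" "Suc n"] that by (cases "Suc i = Suc n") auto
      hence "\<xi> i < zs ! Suc n" using xi that by auto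
      ultimately show ?thesis using \<open>zs ! 0 \<in> {a..b}\<close> \<open>zs ! Suc n \<in> {a..b}\<close> by auto
    qed
    thus ?thesis by auto
  qed
  have "\<exists>\<eta>\<in>{a..b}. (\<lambda>m. H (Suc m)) n \<eta> = 0"
    apply (rule Suc.IH[of _ "\<xi> ` {..<Suc n}"])
    using Suc.prems(1) apply auto[1]
    apply simp
    using card_image[OF inj] apply simp
    using inab apply simp
    using xi by auto
  thus ?case by simp
qed

lemma coeff_pderiv_iter:
  "coeff ((pderiv ^^ m) p) n = (\<Prod>i\<in>{Suc n..n+m}. of_nat i) * coeff p (n+m)"
proof (induction m arbitrary: n)
  case 0 thus ?case by simp
next
  case (Suc m)
  have e: "{Suc n..n + Suc m} = insert (Suc n) {Suc (Suc n)..Suc n + m}" by auto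
  have "coeff ((pderiv ^^ Suc m) p) n = of_nat (Suc n) * coeff ((pderiv ^^ m) p) (Suc n)"
    by (simp add: coeff_pderiv)
  also have "\<dots> = (\<Prod>i\<in>{Suc n..n+Suc m}. of_nat i) * coeff p (n + Suc m)"
    unfolding Suc.IH e by (simp add: mult_ac)
  finally show ?case .
qed

lemma pderiv_iter_zero:
  assumes "\<forall>j\<ge>k. coeff p j = 0"
  shows "(pderiv ^^ k) p = 0"
  by (rule poly_eqI) (simp add: coeff_pderiv_iter assms)

lemma pderiv_iter_top:
  fixes q :: "real poly"
  assumes "coeff q k = 1" "\<forall>j>k. coeff q j = 0"
  shows "(pderiv ^^ k) q = [:fact k:]"
proof (rule poly_eqI)
  fix n
  show "coeff ((pderiv ^^ k) q) n = coeff [:fact k:] n"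
  proof (cases n)
    case 0
    thus ?thesis using assms by (simp add: coeff_pderiv_iter fact_prod)
  next
    case (Suc n')
    thus ?thesis using assms by (simp add: coeff_pderiv_iter)
  qed
qed

lemma prod_linear_coeffs:
  fixes Z :: "real set"
  assumes "finite Z"
  shows "coeff (\<Prod>z\<in>Z. [:-z,1:]) (card Z) = 1 \<and> (\<forall>j>card Z. coeff (\<Prod>z\<in>Z. [:-z,1:]) j = 0)"
proof -
  have dg: "degree (\<Prod>z\<in>Z. [:-z,1:]) = card Z"
    by (subst degree_prod_eq_sum_degree) auto
  have lc: "lead_coeff (\<Prod>z\<in>Z. [:-z,1:]) = 1"
    by (simp add: lead_coeff_prod)
  show ?thesis using dg lc by (auto intro: coeff_eq_0)
qed

lemma interp:
  fixes Z :: "real set" and f :: "real \<Rightarrow> real"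
  assumes "finite Z"
  shows "\<exists>p. (\<forall>j\<ge>card Z. coeff p j = 0) \<and> (\<forall>z\<in>Z. poly p z = f z)"
  using assms
proof (induction Z rule: finite_induct)
  case empty
  show ?case by (intro exI[of _ 0]) simp
next
  case (insert z Z)
  then obtain p where p: "\<forall>j\<ge>card Z. coeff p j = 0" "\<forall>y\<in>Z. poly p y = f y" by blast
  define q where "q = (\<Prod>y\<in>Z. [:-y,1:])"
  have qc: "\<forall>j>card Z. coeff q j = 0" using prod_linear_coeffs[OF insert(1)] q_def by blast
  have q0: "poly q y = 0" if "y \<in> Z" for y
    using that insert(1) by (simp add: q_def poly_prod)
  have qz: "poly q z \<noteq> 0"
    using insert(1,2) by (auto simp: q_def poly_prod)
  define c where "c = (f z - poly p z) / poly q z"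
  show ?case
  proof (intro exI[of _ "p + smult c q"] conjI ballI allI impI)
    fix j assume "card (insert z Z) \<le> j"
    hence "j > card Z" "j \<ge> card Z" using insert by auto
    thus "coeff (p + smult c q) j = 0" using p qc by simp
  next
    fix y assume "y \<in> insert z Z"
    thus "poly (p + smult c q) y = f y"
      using p q0 qz by (auto simp: c_def)
  qed
qed

lemma sign_lemma:
  fixes G :: "nat \<Rightarrow> real \<Rightarrow> real"
  assumes der: "\<forall>m<k. \<forall>t\<in>{a..b}. (G m has_real_derivative G (Suc m) t) (at t within {a..b})"
    and pos: "\<forall>t\<in>{a..b}. G k t \<ge> 0"
    and fin: "finite Z" and cZ: "card Z = k" and Zab: "Z \<subseteq> {a..b}" and zer: "\<forall>z\<in>Z. G 0 z = 0"
    and y: "y \<in> {a..b}" "y \<notin> Z"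
  shows "G 0 y * (\<Prod>z\<in>Z. (y - z)) \<ge> 0"
proof (rule ccontr)
  assume neg: "\<not> ?thesis"
  define q where "q = (\<Prod>z\<in>Z. [:-z,1:])"
  define Q where "Q = (\<Prod>z\<in>Z. (y - z))"
  have Qq: "poly q y = Q" by (simp add: q_def Q_def poly_prod)
  have "G 0 y * Q < 0" using neg Q_def by simp
  define lam where "lam = G 0 y / Q"
  have lamneg: "lam < 0" using \<open>G 0 y * Q < 0\<close>
    by (auto simp: lam_def mult_less_0_iff divide_less_0_iff)
  have "Q \<noteq> 0" using \<open>G 0 y * Q < 0\<close> by auto
  define H where "H m t = G m t - lam * poly ((pderiv ^^ m) q) t" for m t
  have derH: "\<forall>m<k. \<forall>t\<in>{a..b}. (H m has_real_derivative H (Suc m) t) (at t within {a..b})"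
  proof (intro allI impI ballI)
    fix m t assume m: "m < k" and t: "t \<in> {a..b}"
    have "((\<lambda>t. poly ((pderiv ^^ m) q) t) has_real_derivative poly ((pderiv ^^ Suc m) q) t) (at t within {a..b})"
      by (rule has_field_derivative_at_within) simp
    hence "((\<lambda>t. lam * poly ((pderiv ^^ m) q) t) has_real_derivative lam * poly ((pderiv ^^ Suc m) q) t) (at t within {a..b})"
      by (rule DERIV_cmult)
    from DERIV_diff[OF der[rule_format, OF m t] this]
    show "(H m has_real_derivative H (Suc m) t) (at t within {a..b})"
      by (simp add: H_def[abs_def])
  qed
  have zH: "\<forall>z\<in>insert y Z. H 0 z = 0"
  proof
    fix z assume "z \<in> insert y Z"
    thus "H 0 z = 0"
    proof
      assume "z = y" thus ?thesis using Qq \<open>Q \<noteq> 0\<close> by (simp add: H_def lam_def)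
    next
      assume "z \<in> Z"
      hence "poly q z = 0" using fin by (simp add: q_def poly_prod)
      thus ?thesis using zer \<open>z \<in> Z\<close> by (simp add: H_def)
    qed
  qed
  obtain \<xi> where xi: "\<xi> \<in> {a..b}" "H k \<xi> = 0"
    using gen_rolle[OF derH, of "insert y Z"] fin cZ y Zab zH by auto
  have "(pderiv ^^ k) q = [:fact k:]"
    using pderiv_iter_top prod_linear_coeffs[OF fin] cZ q_def by metis
  hence "G k \<xi> = lam * fact k" using xi by (simp add: H_def)
  moreover have "lam * fact k < 0" using lamneg by (simp add: mult_neg_pos)
  moreover have "G k \<xi> \<ge> 0" using pos xi(1) by blast
  ultimately show False by linarith
qed

lemma dec_lemma:
  fixes x :: "nat \<Rightarrow> real"
  assumes "\<forall>i\<in>{1..<N}. x i > x (Suc i)" "1 \<le> i" "i < j" "j \<le> N"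
  shows "x j < x i"
  using assms(3,4)
proof (induction j)
  case 0 thus ?case by simp
next
  case (Suc j)
  have "x (Suc j) < x j" using assms(1,2) Suc.prems by auto
  show ?case
  proof (cases "i = j")
    case True thus ?thesis using \<open>x (Suc j) < x j\<close> by simp
  next
    case False
    hence "x j < x i" using Suc by auto
    thus ?thesis using \<open>x (Suc j) < x j\<close> by simp
  qed
qed

lemma poly_low:
  fixes p :: "real poly"
  assumes "\<forall>j\<ge>k. coeff p j = 0" "k \<ge> 1"
  shows "poly p t = (\<Sum>j<k. coeff p j * t ^ j)"
proof -
  have dk: "degree p < k"
  proof (cases "p = 0")
    case True thus ?thesis using assms by simp
  next
    case False
    hence "coeff p (degree p) \<noteq> 0" by simp
    thus ?thesis using assms(1) by (meson not_le)
  qed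
  have "poly p t = (\<Sum>j\<le>degree p. coeff p j * t ^ j)" by (rule poly_altdef)
  also have "\<dots> = (\<Sum>j<k. coeff p j * t ^ j)"
    by (rule sum.mono_neutral_left) (use dk in \<open>auto simp: coeff_eq_0\<close>)
  finally show ?thesis .
qed

theorem mainTheorem8:
  fixes k :: nat and a b :: real and x w :: "nat \<Rightarrow> real"
    and f :: "real \<Rightarrow> real" and D :: "nat \<Rightarrow> real \<Rightarrow> real"
  assumes k_pos: "k \<ge> 1"
    and x_dec: "\<forall>i\<in>{1..<k+2}. x i > x (Suc i)"
    and x_in: "\<forall>i\<in>{1..k+2}. x i \<in> {a..b}"
    and w1: "w 1 \<ge> 0"
    and wlast: "(-1) ^ k * w (k+2) \<ge> 0"
    and moments: "\<forall>j<k. (\<Sum>i=1..k+2. w i * x i ^ j) = 0"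
    and D0: "\<forall>t\<in>{a..b}. D 0 t = f t"
    and Dderiv: "\<forall>m<k. \<forall>t\<in>{a..b}. (D m has_real_derivative D (Suc m) t) (at t within {a..b})"
    and Dk: "\<forall>t\<in>{a..b}. D k t \<ge> 0"
  shows "(\<Sum>i=1..k+2. w i * f (x i)) \<ge> 0"
proof -
  have dec: "x j < x i" if "1 \<le> i" "i < j" "j \<le> k+2" for i j
    using dec_lemma[OF x_dec that] .
  define Z where "Z = x ` {2..k+1}"
  have inj: "inj_on x {2..k+1}"
  proof (rule inj_onI)
    fix i j assume ij: "i \<in> {2..k+1}" "j \<in> {2..k+1}" "x i = x j"
    show "i = j"
    proof (rule ccontr)
      assume "i \<noteq> j"
      hence "i < j \<or> j < i" by arith
      thus False using dec[of i j] dec[of j i] ij by auto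
    qed
  qed
  have finZ: "finite Z" using Z_def by simp
  have cZ: "card Z = k" using card_image[OF inj] Z_def by simp
  have Zab: "Z \<subseteq> {a..b}" using x_in Z_def by auto
  obtain p where p: "\<forall>j\<ge>k. coeff p j = 0" "\<forall>z\<in>Z. poly p z = f z"
    using interp[OF finZ, of f] cZ by auto
  define G where "G m t = D m t - poly ((pderiv ^^ m) p) t" for m t
  have derG: "\<forall>m<k. \<forall>t\<in>{a..b}. (G m has_real_derivative G (Suc m) t) (at t within {a..b})"
  proof (intro allI impI ballI)
    fix m t assume m: "m < k" and t: "t \<in> {a..b}"
    have "((\<lambda>t. poly ((pderiv ^^ m) p) t) has_real_derivative poly ((pderiv ^^ Suc m) p) t) (at t within {a..b})"
      by (rule has_field_derivative_at_within) simp
    from DERIV_diff[OF Dderiv[rule_format, OF m t] this]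
    show "(G m has_real_derivative G (Suc m) t) (at t within {a..b})"
      by (simp add: G_def[abs_def])
  qed
  have Gk: "\<forall>t\<in>{a..b}. G k t \<ge> 0"
    using Dk pderiv_iter_zero[OF p(1)] by (simp add: G_def)
  have G0: "G 0 t = f t - poly p t" if "t \<in> {a..b}" for t
    using D0 that by (simp add: G_def)
  have Gz: "\<forall>z\<in>Z. G 0 z = 0" using G0 p(2) Zab by auto
  have x1Z: "x 1 \<notin> Z"
  proof
    assume "x 1 \<in> Z"
    then obtain i where i: "i \<in> {2..k+1}" "x 1 = x i" by (auto simp: Z_def)
    have "x i < x 1" by (rule dec) (use i in auto)
    thus False using i by simp
  qed
  have x1ab: "x 1 \<in> {a..b}" using x_in by auto
  have P1: "(\<Prod>z\<in>Z. (x 1 - z)) > 0"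
  proof (rule prod_pos)
    fix z assume "z \<in> Z"
    then obtain i where i: "i \<in> {2..k+1}" "z = x i" by (auto simp: Z_def)
    have "x i < x 1" by (rule dec) (use i in auto)
    thus "0 < x 1 - z" using i by simp
  qed
  have "G 0 (x 1) * (\<Prod>z\<in>Z. (x 1 - z)) \<ge> 0"
    by (rule sign_lemma[OF derG Gk finZ cZ Zab Gz x1ab x1Z])
  hence g1: "G 0 (x 1) \<ge> 0" using P1 by (simp add: zero_le_mult_iff)
  have xlZ: "x (k+2) \<notin> Z"
  proof
    assume "x (k+2) \<in> Z"
    then obtain i where i: "i \<in> {2..k+1}" "x (k+2) = x i" by (auto simp: Z_def)
    have "x (k+2) < x i" by (rule dec) (use i in auto)
    thus False using i by simp
  qed
  have xlab: "x (k+2) \<in> {a..b}" using x_in by auto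
  have P2: "(\<Prod>z\<in>Z. (z - x (k+2))) > 0"
  proof (rule prod_pos)
    fix z assume "z \<in> Z"
    then obtain i where i: "i \<in> {2..k+1}" "z = x i" by (auto simp: Z_def)
    have "x (k+2) < x i" by (rule dec) (use i in auto)
    thus "0 < z - x (k+2)" using i by simp
  qed
  have "(\<Prod>z\<in>Z. (x (k+2) - z)) = (\<Prod>z\<in>Z. (-1) * (z - x (k+2)))" by simp
  also have "\<dots> = (-1) ^ k * (\<Prod>z\<in>Z. (z - x (k+2)))"
    by (simp only: prod.distrib prod_constant cZ)
  finally have Peq: "(\<Prod>z\<in>Z. (x (k+2) - z)) = (-1) ^ k * (\<Prod>z\<in>Z. (z - x (k+2)))" .
  have "G 0 (x (k+2)) * (\<Prod>z\<in>Z. (x (k+2) - z)) \<ge> 0"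
    by (rule sign_lemma[OF derG Gk finZ cZ Zab Gz xlab xlZ])
  hence "((-1) ^ k * G 0 (x (k+2))) * (\<Prod>z\<in>Z. (z - x (k+2))) \<ge> 0"
    unfolding Peq by (simp add: mult_ac)
  hence g2: "(-1) ^ k * G 0 (x (k+2)) \<ge> 0" using P2 by (simp add: zero_le_mult_iff)
  have Sp: "(\<Sum>i=1..k+2. w i * poly p (x i)) = 0"
  proof -
    have "(\<Sum>i=1..k+2. w i * poly p (x i)) = (\<Sum>i=1..k+2. \<Sum>j<k. coeff p j * (w i * x i ^ j))"
      by (simp add: poly_low[OF p(1) k_pos] sum_distrib_left mult_ac)
    also have "\<dots> = (\<Sum>j<k. coeff p j * (\<Sum>i=1..k+2. w i * x i ^ j))"
      by (subst sum.swap) (simp only: sum_distrib_left)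
    also have "\<dots> = 0" using moments by simp
    finally show ?thesis .
  qed
  have "(\<Sum>i=1..k+2. w i * f (x i)) = (\<Sum>i=1..k+2. w i * G 0 (x i)) + (\<Sum>i=1..k+2. w i * poly p (x i))"
  proof (subst sum.distrib[symmetric], rule sum.cong)
    fix i assume "i \<in> {1..k+2}"
    hence "x i \<in> {a..b}" using x_in by blast
    hence "f (x i) = G 0 (x i) + poly p (x i)" using G0 by simp
    thus "w i * f (x i) = w i * G 0 (x i) + w i * poly p (x i)" by (simp add: algebra_simps)
  qed simp
  also have "\<dots> = (\<Sum>i=1..k+2. w i * G 0 (x i))" using Sp by simp
  also have "\<dots> = (\<Sum>i\<in>{1, k+2}. w i * G 0 (x i))"
  proof (rule sum.mono_neutral_right)
    show "\<forall>i\<in>{1..k+2} - {1, k+2}. w i * G 0 (x i) = 0"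
    proof
      fix i assume "i \<in> {1..k+2} - {1, k+2}"
      hence "x i \<in> Z" using Z_def by auto
      thus "w i * G 0 (x i) = 0" using Gz by simp
    qed
  qed auto
  also have "\<dots> = w 1 * G 0 (x 1) + w (k+2) * G 0 (x (k+2))" by simp
  also have "w (k+2) * G 0 (x (k+2)) = ((-1) ^ k * w (k+2)) * ((-1) ^ k * G 0 (x (k+2)))"
    by (simp add: mult_ac flip: power_mult_distrib)
  finally show ?thesis using w1 wlast g1 g2 by simp
qed

end
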